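(* Let $\mathbf B$ be an $n\times q$ random matrix with i.i.d. $\mathcal N(0,1)$ entries, $\mathbf C$ a deterministic $q\times p$ matrix, and $\mathbf A=\mathbf B\mathbf C$. Let $\mathcal K\subset\mathbb R^p$ and $\varepsilon\ge0$. For $\mathbf x^\star\in\mathcal K$, suppose we observe $\mathbf y=\mathbf A\mathbf x^\star+\boldsymbol\nu$ with $\frac1n\|\boldsymbol\nu\|_1\le\varepsilon$, and choose $\widehat{\mathbf x}$ to be any vector satisfying $\widehat{\mathbf x}\in\mathcal K$ and $\frac1n\|\mathbf A\widehat{\mathbf x}-\mathbf y\|_1\le\varepsilon$. Then $$\mathbb E\sup_{\mathbf x^\star\in\mathcal K}\left\{(\widehat{\mathbf x}-\mathbf x^\star)^T\mathbf C^T\mathbf C(\widehat{\mathbf x}-\mathbf x^\star)\right\}^{1/2}\le\sqrt{2\pi}\left(\frac{\mathbb E\sup_{\mathbf u\in\mathcal K-\mathcal K}|\langle\mathbf C^T\mathbf g,\mathbf u\rangle|}{\sqrt n}+\varepsilon\right),$$ where $\mathbf g\sim\mathcal N(0,\mathbf I_q)$ and $\mathcal K-\mathcal K=\{\mathbf u-\mathbf v:\mathbf u,\mathbf v\in\mathcal K\}$.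
   Context: No assumption is made on the error $\boldsymbol\nu$ other than $\frac1n\|\boldsymbol\nu\|_1\le\varepsilon$; $\widehat{\mathbf x}$ may be any vector meeting the stated feasibility conditions for the given $\mathbf y$. *)

theory Defs
  imports "HOL-Probability.Probability"
begin

definition std_gauss :: "real measure" where
  "std_gauss = density lborel (\<lambda>x. ennreal (std_normal_density x))"

definition gauss_mat :: "nat \<Rightarrow> nat \<Rightarrow> (nat \<times> nat \<Rightarrow> real) measure" where
  "gauss_mat n q = PiM ({..<n} \<times> {..<q}) (\<lambda>_. std_gauss)"

definition gauss_vec :: "nat \<Rightarrow> (nat \<Rightarrow> real) measure" where
  "gauss_vec q = PiM {..<q} (\<lambda>_. std_gauss)"

definition mat_mult :: "nat \<Rightarrow> (nat \<times> nat \<Rightarrow> real) \<Rightarrow> (nat \<Rightarrow> nat \<Rightarrow> real) \<Rightarrow> nat \<Rightarrow> nat \<Rightarrow> real" where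
  "mat_mult q B C = (\<lambda>i j. \<Sum>k<q. B (i, k) * C k j)"

definition mat_vec :: "nat \<Rightarrow> (nat \<Rightarrow> nat \<Rightarrow> real) \<Rightarrow> (nat \<Rightarrow> real) \<Rightarrow> nat \<Rightarrow> real" where
  "mat_vec c M x = (\<lambda>i. \<Sum>j<c. M i j * x j)"

text \<open>Vectors in R^p, represented as functions nat => real vanishing from index p on.\<close>
definition vecs :: "nat \<Rightarrow> (nat \<Rightarrow> real) set" where
  "vecs p = {x. \<forall>j\<ge>p. x j = 0}"

end

theory Submission
  imports Defs
begin
lemma sg_prob: "prob_space std_gauss"
  unfolding std_gauss_def by (rule prob_space_normal_density) simp

lemma sets_sg[simp, measurable_cong]: "sets std_gauss = sets borel"
  by (simp add: std_gauss_def)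

lemma space_sg[simp]: "space std_gauss = UNIV"
  by (simp add: std_gauss_def)

lemma prob_PiM_sg: "prob_space (PiM S (\<lambda>_. std_gauss))"
  by (intro prob_space_PiM sg_prob)

lemma coords_indep:
  assumes "finite S" "S \<noteq> {}"
  shows "prob_space.indep_vars (PiM S (\<lambda>_. std_gauss)) (\<lambda>_. borel) (\<lambda>s x. x s) S"
proof -
  interpret P: prob_space "PiM S (\<lambda>_. std_gauss)" by (rule prob_PiM_sg)
  have "distr (PiM S (\<lambda>_. std_gauss)) (PiM S (\<lambda>_. std_gauss)) (\<lambda>x. \<lambda>i\<in>S. x i)
      = distr (PiM S (\<lambda>_. std_gauss)) (PiM S (\<lambda>_. std_gauss)) (\<lambda>x. x)"
    by (rule distr_cong) (auto simp: space_PiM)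
  also have "\<dots> = PiM S (\<lambda>_. std_gauss)" by (rule distr_id)
  also have "\<dots> = PiM S (\<lambda>i. distr (PiM S (\<lambda>_. std_gauss)) std_gauss (\<lambda>x. x i))"
    by (intro PiM_cong refl distr_PiM_component[symmetric] sg_prob) 
  finally have "P.indep_vars (\<lambda>_. std_gauss) (\<lambda>s x. x s) S"
    by (subst P.indep_vars_iff_distr_eq_PiM'[OF assms(2)]) auto
  then show ?thesis
    unfolding P.indep_vars_def2 by (simp add: measurable_def)
qed

lemma coord_distributed:
  assumes "s \<in> S"
  shows "distributed (PiM S (\<lambda>_. std_gauss)) lborel (\<lambda>x. x s) std_normal_density"
proof -
  have "distr (PiM S (\<lambda>_. std_gauss)) lborel (\<lambda>x. x s) = distr (PiM S (\<lambda>_. std_gauss)) std_gauss (\<lambda>x. x s)"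
    by (rule distr_cong) auto
  also have "\<dots> = std_gauss" by (rule distr_PiM_component[OF sg_prob assms])
  finally show ?thesis
    unfolding distributed_def std_gauss_def using assms by auto
qed

lemma gauss_lin:
  assumes S: "finite S" and pos: "(\<Sum>s\<in>S. (a s)^2) > 0"
  shows "distributed (PiM S (\<lambda>_. std_gauss)) lborel (\<lambda>x. \<Sum>s\<in>S. a s * x s)
           (normal_density 0 (sqrt (\<Sum>s\<in>S. (a s)^2)))"
proof -
  interpret P: prob_space "PiM S (\<lambda>_. std_gauss)" by (rule prob_PiM_sg)
  define S' where "S' = {s\<in>S. a s \<noteq> 0}"
  have S'S: "S' \<subseteq> S" and fS': "finite S'" using S by (auto simp: S'_def)
  have sq: "(\<Sum>s\<in>S. (a s)^2) = (\<Sum>s\<in>S'. (a s)^2)"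
    using S by (intro sum.mono_neutral_right) (auto simp: S'_def)
  have sm: "\<And>x. (\<Sum>s\<in>S. a s * x s) = (\<Sum>s\<in>S'. a s * x s)"
    using S by (intro sum.mono_neutral_right) (auto simp: S'_def)
  have ne: "S' \<noteq> {}" using pos sq by auto
  have SNE: "S \<noteq> {}" using ne S'S by auto
  have ind: "P.indep_vars (\<lambda>_. borel) (\<lambda>s x. a s * x s) S'"
    by (rule P.indep_vars_subset[OF P.indep_vars_compose2[OF coords_indep[OF S SNE]] S'S]) auto
  have dist: "distributed (PiM S (\<lambda>_. std_gauss)) lborel (\<lambda>x. a s * x s) (normal_density 0 \<bar>a s\<bar>)"
    if "s \<in> S'" for s
    using P.normal_density_affine[OF coord_distributed[of s S], of "a s" 0] that
    by (auto simp: S'_def)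
  have "distributed (PiM S (\<lambda>_. std_gauss)) lborel (\<lambda>x. \<Sum>s\<in>S'. a s * x s)
           (normal_density (\<Sum>s\<in>S'. 0) (sqrt (\<Sum>s\<in>S'. \<bar>a s\<bar>^2)))"
    by (rule P.sum_indep_normal[OF fS' ne ind _ dist]) (auto simp: S'_def)
  then show ?thesis by (simp add: sm sq)
qed

lemma gauss_lin_abs:
  assumes S: "finite S"
  shows "integrable (PiM S (\<lambda>_. std_gauss)) (\<lambda>x. \<bar>\<Sum>s\<in>S. a s * x s\<bar>)
    \<and> integral\<^sup>L (PiM S (\<lambda>_. std_gauss)) (\<lambda>x. \<bar>\<Sum>s\<in>S. a s * x s\<bar>)
        = sqrt (2/pi) * sqrt (\<Sum>s\<in>S. (a s)^2)"
proof (cases "(\<Sum>s\<in>S. (a s)^2) > 0")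
  case False
  then have "(\<Sum>s\<in>S. (a s)^2) = 0" using sum_nonneg[of S "\<lambda>s. (a s)^2"] by auto
  then have "\<forall>s\<in>S. a s = 0" using S by (subst (asm) sum_nonneg_eq_0_iff) auto
  then show ?thesis by simp
next
  case True
  define \<sigma> where "\<sigma> = sqrt (\<Sum>s\<in>S. (a s)^2)"
  have sp: "\<sigma> > 0" using True by (simp add: \<sigma>_def)
  note D = gauss_lin[OF S True, folded \<sigma>_def]
  have I1: "integrable lborel (\<lambda>x. normal_density 0 \<sigma> x * \<bar>x\<bar>)"
    using integrable_normal_moment_abs[OF sp, of 0 1] by simp
  have I2: "(LBINT x. normal_density 0 \<sigma> x * \<bar>x\<bar>) = \<sigma> * sqrt (2/pi)"
    using integral_normal_moment_abs_odd[OF sp, of 0 0] by simp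
  have "integrable (PiM S (\<lambda>_. std_gauss)) (\<lambda>x. \<bar>\<Sum>s\<in>S. a s * x s\<bar>)"
    using distributed_integrable[OF D, of "\<lambda>x. \<bar>x\<bar>"] I1 normal_density_nonneg[of 0 \<sigma>] by auto
  moreover have "integral\<^sup>L (PiM S (\<lambda>_. std_gauss)) (\<lambda>x. \<bar>\<Sum>s\<in>S. a s * x s\<bar>) = \<sigma> * sqrt (2/pi)"
    using distributed_integral[OF D, of "\<lambda>x. \<bar>x\<bar>"] I2 normal_density_nonneg[of 0 \<sigma>] by auto
  ultimately show ?thesis by (simp add: \<sigma>_def mult.commute)
qed

lemma sum_pairs: "(\<Sum>s\<in>{..<n}\<times>{..<q}. f s) = (\<Sum>i<n. \<Sum>k<q. f (i,k))"
  by (simp add: sum.cartesian_product)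

lemma sum_delta_mult:
  fixes c :: "nat \<Rightarrow> real"
  shows "(\<Sum>ka<q. (if ka = k then c ka else 0) * f ka) = (if k < q then c k * f k else 0)"
proof -
  have "(\<Sum>ka<q. (if ka = k then c ka else 0) * f ka) = (\<Sum>ka<q. if ka = k then c ka * f ka else 0)"
    by (rule sum.cong) auto
  then show ?thesis by (simp add: sum.delta)
qed

lemma gauss_colsum:
  assumes n: "n > 0" and q: "q > 0" and \<sigma>: "\<And>i. \<bar>\<sigma> i\<bar> = (1::real)"
  shows "distr (gauss_mat n q) (gauss_vec q)
           (\<lambda>B. \<lambda>k\<in>{..<q}. (\<Sum>i<n. \<sigma> i * B (i,k)) / sqrt n) = gauss_vec q"
proof -
  define S where "S = {..<n}\<times>{..<q}"
  have fS: "finite S" and SNE: "S \<noteq> {}" using n q by (auto simp: S_def)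
  interpret P: prob_space "PiM S (\<lambda>_. std_gauss)" by (rule prob_PiM_sg)
  define Y where "Y = (\<lambda>(k::nat) (B::nat\<times>nat\<Rightarrow>real). (\<Sum>i<n. \<sigma> i * B (i,k)) / sqrt n)"
  define a where "a = (\<lambda>(k::nat) (s::nat\<times>nat). if snd s = k then \<sigma> (fst s) / sqrt n else 0)"
  have Ya: "Y k B = (\<Sum>s\<in>S. a k s * B s)" if "k < q" for k B
    using that by (simp add: S_def sum_pairs a_def Y_def sum_divide_distrib sum_delta_mult)
  have asq: "(\<Sum>s\<in>S. (a k s)^2) = 1" if "k < q" for k
  proof -
    have "(\<Sum>s\<in>S. (a k s)^2) = (\<Sum>i<n. (\<sigma> i / sqrt n)^2)"
      using that by (simp add: S_def sum_pairs a_def power2_eq_square sum_delta_mult)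
    also have "\<dots> = (\<Sum>i<n. 1 / n)"
    proof (intro sum.cong refl)
      fix i have "(\<sigma> i)^2 = 1" by (metis power2_abs \<sigma> one_power2)
      then show "(\<sigma> i / sqrt n)^2 = 1 / n" using n by (simp add: power_divide)
    qed
    also have "\<dots> = 1" using n by simp
    finally show ?thesis .
  qed
  have distY: "distr (PiM S (\<lambda>_. std_gauss)) std_gauss (Y k) = std_gauss" if "k < q" for k
  proof -
    have D: "distributed (PiM S (\<lambda>_. std_gauss)) lborel (Y k) std_normal_density"
    proof -
      have "Y k = (\<lambda>B. \<Sum>s\<in>S. a k s * B s)" by (rule ext) (rule Ya[OF that])
      then show ?thesis using gauss_lin[OF fS, of "a k"] asq[OF that] by simp
    qed
    have "distr (PiM S (\<lambda>_. std_gauss)) std_gauss (Y k) = distr (PiM S (\<lambda>_. std_gauss)) lborel (Y k)"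
      by (rule distr_cong) auto
    also have "\<dots> = std_gauss" using D unfolding distributed_def std_gauss_def by simp
    finally show ?thesis .
  qed
  define K where "K = (\<lambda>k::nat. {..<n}\<times>{k})"
  have indR: "P.indep_vars (\<lambda>k. PiM (K k) (\<lambda>_. borel)) (\<lambda>k \<omega>. restrict (\<lambda>i. \<omega> i) (K k)) {..<q}"
    by (rule P.indep_vars_restrict[OF coords_indep[OF fS SNE]]) (auto simp: K_def S_def disjoint_family_on_def)
  have meas: "(\<lambda>z. (\<Sum>i<n. \<sigma> i * z (i,k)) / sqrt n) \<in> borel_measurable (PiM (K k) (\<lambda>_. borel))" for k
    by (auto simp: K_def intro!: borel_measurable_divide borel_measurable_sum borel_measurable_times measurable_component_singleton)
  have "P.indep_vars (\<lambda>_. borel) (\<lambda>k \<omega>. (\<lambda>z. (\<Sum>i<n. \<sigma> i * z (i,k)) / sqrt n) (restrict (\<lambda>i. \<omega> i) (K k))) {..<q}"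
    by (rule P.indep_vars_compose2[OF indR meas])
  also have "(\<lambda>k \<omega>. (\<lambda>z. (\<Sum>i<n. \<sigma> i * z (i,k)) / sqrt n) (restrict (\<lambda>i. \<omega> i) (K k))) = Y"
    by (auto simp: fun_eq_iff Y_def K_def)
  finally have "P.indep_vars (\<lambda>_. borel) Y {..<q}" .
  then have ind: "P.indep_vars (\<lambda>_. std_gauss) Y {..<q}"
    unfolding P.indep_vars_def2 by (simp add: measurable_def)
  have rv: "Y k \<in> measurable (PiM S (\<lambda>_. std_gauss)) std_gauss" if "k \<in> {..<q}" for k
    using ind that unfolding P.indep_vars_def2 by auto
  have "distr (PiM S (\<lambda>_. std_gauss)) (PiM {..<q} (\<lambda>_. std_gauss)) (\<lambda>x. \<lambda>k\<in>{..<q}. Y k x)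
      = PiM {..<q} (\<lambda>k. distr (PiM S (\<lambda>_. std_gauss)) std_gauss (Y k))"
    using ind by (subst (asm) P.indep_vars_iff_distr_eq_PiM') (use q rv in auto)
  also have "\<dots> = PiM {..<q} (\<lambda>k. std_gauss)"
    by (intro PiM_cong refl) (simp add: distY)
  finally show ?thesis by (simp add: gauss_mat_def gauss_vec_def S_def Y_def)
qed

definition GG :: "nat \<Rightarrow> nat \<Rightarrow> (nat \<times> nat \<Rightarrow> real) measure" where
  "GG n q = PiM ({..<2*n}\<times>{..<q}) (\<lambda>_. std_gauss)"

definition topm :: "nat \<Rightarrow> nat \<Rightarrow> (nat \<times> nat \<Rightarrow> real) \<Rightarrow> (nat \<times> nat \<Rightarrow> real)" where
  "topm n q x = restrict x ({..<n}\<times>{..<q})"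

definition botm :: "nat \<Rightarrow> nat \<Rightarrow> (nat \<times> nat \<Rightarrow> real) \<Rightarrow> (nat \<times> nat \<Rightarrow> real)" where
  "botm n q x = (\<lambda>s\<in>{..<n}\<times>{..<q}. x (fst s + n, snd s))"

lemma prob_GG: "prob_space (GG n q)" unfolding GG_def by (rule prob_PiM_sg)
lemma prob_gm: "prob_space (gauss_mat n q)" unfolding gauss_mat_def by (rule prob_PiM_sg)
lemma prob_gv: "prob_space (gauss_vec q)" unfolding gauss_vec_def by (rule prob_PiM_sg)

lemma marg_top: "distr (GG n q) (gauss_mat n q) (topm n q) = gauss_mat n q"
proof -
  have "distr (GG n q) (PiM ({..<n}\<times>{..<q}) (\<lambda>i. (\<lambda>_. std_gauss) (id i))) (\<lambda>\<omega>. \<lambda>s\<in>{..<n}\<times>{..<q}. \<omega> (id s))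
     = PiM ({..<n}\<times>{..<q}) (\<lambda>i. (\<lambda>_. std_gauss) (id i))"
    unfolding GG_def by (rule distr_PiM_reindex) (auto intro: sg_prob)
  then show ?thesis by (simp add: gauss_mat_def topm_def[abs_def])
qed

lemma marg_bot: "distr (GG n q) (gauss_mat n q) (botm n q) = gauss_mat n q"
proof -
  have "distr (GG n q) (PiM ({..<n}\<times>{..<q}) (\<lambda>i. (\<lambda>_. std_gauss) ((\<lambda>s. (fst s + n, snd s)) i)))
       (\<lambda>\<omega>. \<lambda>s\<in>{..<n}\<times>{..<q}. \<omega> ((\<lambda>s. (fst s + n, snd s)) s))
     = PiM ({..<n}\<times>{..<q}) (\<lambda>i. (\<lambda>_. std_gauss) ((\<lambda>s. (fst s + n, snd s)) i))"
    unfolding GG_def by (rule distr_PiM_reindex) (auto intro: sg_prob simp: inj_on_def)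
  then show ?thesis by (simp add: gauss_mat_def botm_def[abs_def])
qed

lemma meas_topm[measurable]: "topm n q \<in> measurable (GG n q) (gauss_mat n q)"
  unfolding GG_def gauss_mat_def topm_def[abs_def]
  by (rule measurable_restrict) (auto intro!: measurable_component_singleton)

lemma meas_botm[measurable]: "botm n q \<in> measurable (GG n q) (gauss_mat n q)"
  unfolding GG_def gauss_mat_def botm_def[abs_def]
  by (rule measurable_restrict) (auto intro!: measurable_component_singleton)

lemma int_top:
  assumes "f \<in> borel_measurable (gauss_mat n q)"
  shows "(\<integral>\<^sup>+x. f (topm n q x) \<partial>GG n q) = integral\<^sup>N (gauss_mat n q) f"
proof -
  have "(\<integral>\<^sup>+x. f (topm n q x) \<partial>GG n q) = integral\<^sup>N (distr (GG n q) (gauss_mat n q) (topm n q)) f"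
    by (rule nn_integral_distr[symmetric]) (use assms in auto)
  then show ?thesis by (simp add: marg_top)
qed

lemma int_bot:
  assumes "f \<in> borel_measurable (gauss_mat n q)"
  shows "(\<integral>\<^sup>+x. f (botm n q x) \<partial>GG n q) = integral\<^sup>N (gauss_mat n q) f"
proof -
  have "(\<integral>\<^sup>+x. f (botm n q x) \<partial>GG n q) = integral\<^sup>N (distr (GG n q) (gauss_mat n q) (botm n q)) f"
    by (rule nn_integral_distr[symmetric]) (use assms in auto)
  then show ?thesis by (simp add: marg_bot)
qed

lemma fold_GG:
  assumes F: "(\<lambda>x. F (topm n q x) (botm n q x)) \<in> borel_measurable (GG n q)"
    and FB: "\<And>B. F B \<in> borel_measurable (gauss_mat n q)"
  shows "(\<integral>\<^sup>+x. F (topm n q x) (botm n q x) \<partial>GG n q)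
       = (\<integral>\<^sup>+B. (\<integral>\<^sup>+B'. F B B' \<partial>gauss_mat n q) \<partial>gauss_mat n q)"
proof -
  define S where "S = {..<n}\<times>{..<q}"
  define S2 where "S2 = {n..<2*n}\<times>{..<q}"
  define sh where "sh = (\<lambda>s::nat\<times>nat. (fst s + n, snd s))"
  interpret PS: product_sigma_finite "\<lambda>_::nat\<times>nat. std_gauss"
    unfolding product_sigma_finite_def using sg_prob prob_space_imp_sigma_finite by blast
  have U: "{..<2*n}\<times>{..<q} = S \<union> S2" by (auto simp: S_def S2_def)
  have D: "S \<inter> S2 = {}" by (auto simp: S_def S2_def)
  have fin: "finite S" "finite S2" by (auto simp: S_def S2_def)
  have "(\<integral>\<^sup>+x. F (topm n q x) (botm n q x) \<partial>GG n q)
      = (\<integral>\<^sup>+x. (\<integral>\<^sup>+y. F (topm n q (merge S S2 (x,y))) (botm n q (merge S S2 (x,y))) \<partial>PiM S2 (\<lambda>_. std_gauss)) \<partial>PiM S (\<lambda>_. std_gauss))"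
    using F unfolding GG_def U by (rule PS.product_nn_integral_fold[OF D fin])
  also have "\<dots> = (\<integral>\<^sup>+x. (\<integral>\<^sup>+y. F x (\<lambda>s\<in>S. y (sh s)) \<partial>PiM S2 (\<lambda>_. std_gauss)) \<partial>PiM S (\<lambda>_. std_gauss))"
  proof (intro nn_integral_cong)
    fix x y assume x: "x \<in> space (PiM S (\<lambda>_. std_gauss))" and y: "y \<in> space (PiM S2 (\<lambda>_. std_gauss))"
    have "topm n q (merge S S2 (x,y)) = x"
      using x by (auto simp: topm_def S_def[symmetric] space_PiM PiE_def extensional_def merge_def fun_eq_iff)
    moreover have "botm n q (merge S S2 (x,y)) = (\<lambda>s\<in>S. y (sh s))"
      by (auto simp: botm_def S_def S2_def sh_def merge_def fun_eq_iff)
    ultimately show "F (topm n q (merge S S2 (x,y))) (botm n q (merge S S2 (x,y))) = F x (\<lambda>s\<in>S. y (sh s))"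
      by simp
  qed
  also have "\<dots> = (\<integral>\<^sup>+x. (\<integral>\<^sup>+B'. F x B' \<partial>gauss_mat n q) \<partial>PiM S (\<lambda>_. std_gauss))"
  proof (intro nn_integral_cong)
    fix x
    have "distr (PiM S2 (\<lambda>_. std_gauss)) (PiM S (\<lambda>i. (\<lambda>_. std_gauss) (sh i))) (\<lambda>\<omega>. \<lambda>s\<in>S. \<omega> (sh s))
       = PiM S (\<lambda>i. (\<lambda>_. std_gauss) (sh i))"
      by (rule distr_PiM_reindex) (auto intro: sg_prob simp: inj_on_def sh_def S_def S2_def)
    then have dd: "distr (PiM S2 (\<lambda>_. std_gauss)) (gauss_mat n q) (\<lambda>\<omega>. \<lambda>s\<in>S. \<omega> (sh s)) = gauss_mat n q"
      by (simp add: gauss_mat_def S_def)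
    have mm: "(\<lambda>\<omega>. \<lambda>s\<in>S. \<omega> (sh s)) \<in> measurable (PiM S2 (\<lambda>_. std_gauss)) (gauss_mat n q)"
      unfolding gauss_mat_def S_def[symmetric]
      by (rule measurable_restrict) (auto intro!: measurable_component_singleton simp: sh_def S_def S2_def)
    show "(\<integral>\<^sup>+y. F x (\<lambda>s\<in>S. y (sh s)) \<partial>PiM S2 (\<lambda>_. std_gauss)) = (\<integral>\<^sup>+B'. F x B' \<partial>gauss_mat n q)"
      proof -
      have "(\<integral>\<^sup>+y. F x (\<lambda>s\<in>S. y (sh s)) \<partial>PiM S2 (\<lambda>_. std_gauss))
          = integral\<^sup>N (distr (PiM S2 (\<lambda>_. std_gauss)) (gauss_mat n q) (\<lambda>\<omega>. \<lambda>s\<in>S. \<omega> (sh s))) (F x)"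
        by (rule nn_integral_distr[symmetric, OF mm]) (use FB in auto)
      then show ?thesis by (simp add: dd)
    qed
  qed
  finally show ?thesis by (simp add: gauss_mat_def S_def)
qed

definition swp :: "nat \<Rightarrow> nat set \<Rightarrow> nat \<times> nat \<Rightarrow> nat \<times> nat" where
  "swp n E s = (if fst s < n \<and> fst s \<in> E then (fst s + n, snd s)
               else if n \<le> fst s \<and> fst s - n \<in> E then (fst s - n, snd s) else s)"

lemma swp_inj: "E \<subseteq> {..<n} \<Longrightarrow> inj_on (swp n E) ({..<2*n}\<times>{..<q})"
  unfolding inj_on_def swp_def by (auto split: if_splits)

lemma swp_into: "E \<subseteq> {..<n} \<Longrightarrow> swp n E \<in> ({..<2*n}\<times>{..<q}) \<rightarrow> ({..<2*n}\<times>{..<q})"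
  unfolding swp_def by (auto split: if_splits)

lemma swap_GG:
  assumes E: "E \<subseteq> {..<n}" and f: "f \<in> borel_measurable (GG n q)"
  shows "(\<integral>\<^sup>+x. f (\<lambda>s\<in>{..<2*n}\<times>{..<q}. x (swp n E s)) \<partial>GG n q) = integral\<^sup>N (GG n q) f"
proof -
  have "distr (GG n q) (PiM ({..<2*n}\<times>{..<q}) (\<lambda>i. (\<lambda>_. std_gauss) (swp n E i)))
          (\<lambda>\<omega>. \<lambda>s\<in>{..<2*n}\<times>{..<q}. \<omega> (swp n E s))
     = PiM ({..<2*n}\<times>{..<q}) (\<lambda>i. (\<lambda>_. std_gauss) (swp n E i))"
    unfolding GG_def
  proof (rule distr_PiM_reindex)
    show "inj_on (swp n E) ({..<2*n}\<times>{..<q})" by (rule swp_inj[OF E])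
  qed (use E in \<open>auto intro: sg_prob simp: swp_def split: if_splits\<close>)
  then have dd: "distr (GG n q) (GG n q) (\<lambda>\<omega>. \<lambda>s\<in>{..<2*n}\<times>{..<q}. \<omega> (swp n E s)) = GG n q"
    by (simp add: GG_def)
  have mm: "(\<lambda>\<omega>. \<lambda>s\<in>{..<2*n}\<times>{..<q}. \<omega> (swp n E s)) \<in> measurable (GG n q) (GG n q)"
    unfolding GG_def
    by (rule measurable_restrict) (auto intro!: measurable_component_singleton simp: swp_def split: if_splits)
  show ?thesis
  proof -
    have "(\<integral>\<^sup>+x. f (\<lambda>s\<in>{..<2*n}\<times>{..<q}. x (swp n E s)) \<partial>GG n q)
        = integral\<^sup>N (distr (GG n q) (GG n q) (\<lambda>\<omega>. \<lambda>s\<in>{..<2*n}\<times>{..<q}. \<omega> (swp n E s))) f"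
      by (rule nn_integral_distr[symmetric, OF mm]) (use f in auto)
    then show ?thesis by (simp add: dd)
  qed
qed

lemma top_swp: "E \<subseteq> {..<n} \<Longrightarrow> topm n q (\<lambda>s\<in>{..<2*n}\<times>{..<q}. x (swp n E s))
   = (\<lambda>s\<in>{..<n}\<times>{..<q}. if fst s \<in> E then botm n q x s else topm n q x s)"
  by (auto simp: topm_def botm_def swp_def fun_eq_iff)

lemma bot_swp: "E \<subseteq> {..<n} \<Longrightarrow> botm n q (\<lambda>s\<in>{..<2*n}\<times>{..<q}. x (swp n E s))
   = (\<lambda>s\<in>{..<n}\<times>{..<q}. if fst s \<in> E then topm n q x s else botm n q x s)"
  by (auto simp: topm_def botm_def swp_def fun_eq_iff)

lemma dense_subset:
  fixes T :: "(nat \<Rightarrow> real) set"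
  obtains D where "D \<subseteq> T" "countable D" "\<And>U. open U \<Longrightarrow> U \<inter> T \<noteq> {} \<Longrightarrow> U \<inter> D \<noteq> {}"
proof -
  obtain B :: "(nat \<Rightarrow> real) set set" where B: "countable B" "topological_basis B"
    using ex_countable_basis by blast
  define D where "D = (\<lambda>b. SOME x. x \<in> b \<inter> T) ` {b\<in>B. b \<inter> T \<noteq> {}}"
  have Ssel: "(SOME x. x \<in> b \<inter> T) \<in> b \<inter> T" if ne: "b \<inter> T \<noteq> {}" for b
  proof -
    obtain x where "x \<in> b \<inter> T" using ne by blast
    then show ?thesis by (rule someI[where P="\<lambda>x. x \<in> b \<inter> T"])
  qed
  have "D \<subseteq> T" unfolding D_def using Ssel by blast
  moreover have "countable D" unfolding D_def using B(1) by simp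
  moreover have "U \<inter> D \<noteq> {}" if U: "open U" "U \<inter> T \<noteq> {}" for U
  proof -
    obtain u where u: "u \<in> U" "u \<in> T" using U by auto
    obtain b where b: "b \<in> B" "u \<in> b" "b \<subseteq> U" using topological_basisE[OF B(2) U(1) u(1)] by blast
    have "b \<inter> T \<noteq> {}" using b u by auto
    then have "(SOME x. x \<in> b \<inter> T) \<in> D" "(SOME x. x \<in> b \<inter> T) \<in> b \<inter> T"
      using b Ssel unfolding D_def by blast+
    then show ?thesis using b by blast
  qed
  ultimately show ?thesis using that by blast
qed

lemma sup_dense:
  fixes r :: "(nat \<Rightarrow> real) \<Rightarrow> real"
  assumes DT: "D \<subseteq> T" and dense: "\<And>U. open U \<Longrightarrow> U \<inter> T \<noteq> {} \<Longrightarrow> U \<inter> D \<noteq> {}"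
    and r: "continuous_on UNIV r"
  shows "(SUP u\<in>T. ennreal (r u)) = (SUP u\<in>D. ennreal (r u))"
proof (rule antisym)
  show "(SUP u\<in>D. ennreal (r u)) \<le> (SUP u\<in>T. ennreal (r u))" using DT by (rule SUP_subset_mono) auto
  show "(SUP u\<in>T. ennreal (r u)) \<le> (SUP u\<in>D. ennreal (r u))"
  proof (rule SUP_least)
    fix u assume u: "u \<in> T"
    show "ennreal (r u) \<le> (SUP u\<in>D. ennreal (r u))"
    proof (rule dense_le)
      fix y assume y: "y < ennreal (r u)"
      then obtain y' where y': "y = ennreal y'" "0 \<le> y'"
        by (cases y) auto
      then have "y' < r u" using y by (metis ennreal_less_iff ennreal_less_zero_iff leI order_le_less_trans)
      have "open {v. y' < r v}" by (rule open_Collect_less) (auto intro: r)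
      moreover have "{v. y' < r v} \<inter> T \<noteq> {}" using u \<open>y' < r u\<close> by auto
      ultimately obtain d where d: "d \<in> D" "y' < r d" using dense by blast
      have "y \<le> ennreal (r d)" using d y' by (simp add: ennreal_leI)
      also have "\<dots> \<le> (SUP u\<in>D. ennreal (r u))" using d by (intro SUP_upper) auto
      finally show "y \<le> (SUP u\<in>D. ennreal (r u))" .
    qed
  qed
qed

definition sg :: "nat set \<Rightarrow> nat \<Rightarrow> real" where
  "sg E i = (if i \<in> E then -1 else 1)"

lemma ereal_SUP_plus_le:
  fixes f g :: "'u \<Rightarrow> real"
  assumes U: "U \<noteq> {}" and le: "\<And>u s. u \<in> U \<Longrightarrow> s \<in> U \<Longrightarrow> ereal (f u) + ereal (g s) \<le> z"
  shows "(SUP u\<in>U. ereal (f u)) + (SUP s\<in>U. ereal (g s)) \<le> z"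
proof -
  obtain u0 where u0: "u0 \<in> U" using U by auto
  have A: "(SUP u\<in>U. ereal (f u)) \<noteq> -\<infinity>"
    using SUP_upper[OF u0, of "\<lambda>u. ereal (f u)"] by auto
  have "(SUP u\<in>U. ereal (f u)) + (SUP s\<in>U. ereal (g s)) = (SUP s\<in>U. (SUP u\<in>U. ereal (f u)) + ereal (g s))"
    using U A by (simp add: SUP_ereal_add_right)
  also have "\<dots> \<le> z"
  proof (rule SUP_least)
    fix s assume s: "s \<in> U"
    have "(SUP u\<in>U. ereal (f u)) + ereal (g s) = (SUP u\<in>U. ereal (f u) + ereal (g s))"
      by (subst SUP_ereal_add_left) (use U in auto)
    also have "\<dots> \<le> z" using le s by (intro SUP_least) auto
    finally show "(SUP u\<in>U. ereal (f u)) + ereal (g s) \<le> z" .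
  qed
  finally show ?thesis .
qed

lemma one_coord:
  fixes c t :: "'u \<Rightarrow> real"
  assumes U: "U \<noteq> {}"
  shows "(SUP u\<in>U. ereal (c u + \<bar>t u\<bar>)) + (SUP u\<in>U. ereal (c u - \<bar>t u\<bar>))
       \<le> (SUP u\<in>U. ereal (c u + t u)) + (SUP u\<in>U. ereal (c u - t u))"
proof (rule ereal_SUP_plus_le[OF U])
  fix u s assume u: "u \<in> U" and s: "s \<in> U"
  let ?R = "(SUP u\<in>U. ereal (c u + t u)) + (SUP u\<in>U. ereal (c u - t u))"
  show "ereal (c u + \<bar>t u\<bar>) + ereal (c s - \<bar>t s\<bar>) \<le> ?R"
  proof (cases "t s \<le> t u")
    case True
    have "ereal (c u + \<bar>t u\<bar>) + ereal (c s - \<bar>t s\<bar>) \<le> ereal (c u + t u) + ereal (c s - t s)"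
      using True by simp
    also have "\<dots> \<le> ?R" using u s by (intro add_mono SUP_upper) auto
    finally show ?thesis .
  next
    case False
    have "ereal (c u + \<bar>t u\<bar>) + ereal (c s - \<bar>t s\<bar>) \<le> ereal (c s + t s) + ereal (c u - t u)"
      using False by simp
    also have "\<dots> \<le> ?R" using u s by (intro add_mono SUP_upper) auto
    finally show ?thesis .
  qed
qed

lemma sum_Pow_insert:
  assumes "finite I" "j \<notin> I"
  shows "(\<Sum>E\<in>Pow (insert j I). f E) = (\<Sum>E\<in>Pow I. f E) + (\<Sum>E\<in>Pow I. f (insert j E))"
proof -
  have "Pow (insert j I) = Pow I \<union> insert j ` Pow I" by (rule Pow_insert)
  moreover have "Pow I \<inter> insert j ` Pow I = {}" using assms by auto
  moreover have "inj_on (insert j) (Pow I)" using assms(2) by (intro inj_onI) (metis PowD insert_ident subsetD)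
  ultimately show ?thesis using assms
    by (simp add: sum.union_disjoint sum.reindex)
qed

lemma contraction:
  fixes t :: "nat \<Rightarrow> 'u \<Rightarrow> real"
  assumes I: "finite I" and U: "U \<noteq> {}"
  shows "(\<Sum>E\<in>Pow I. SUP u\<in>U. ereal (a u + (\<Sum>i\<in>I. sg E i * \<bar>t i u\<bar>)))
       \<le> (\<Sum>E\<in>Pow I. SUP u\<in>U. ereal (a u + (\<Sum>i\<in>I. sg E i * t i u)))"
  using I
proof (induction I arbitrary: a rule: finite_induct)
  case empty
  then show ?case by simp
next
  case (insert j I)
  have e1: "(\<Sum>i\<in>insert j I. sg E i * x i) = x j + (\<Sum>i\<in>I. sg E i * x i)" if "E \<in> Pow I" for E x
    using insert that by (auto simp: sg_def)
  have e2: "(\<Sum>i\<in>insert j I. sg (insert j E) i * x i) = - x j + (\<Sum>i\<in>I. sg E i * x i)" if "E \<in> Pow I" for E x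
  proof -
    have "(\<Sum>i\<in>I. sg (insert j E) i * x i) = (\<Sum>i\<in>I. sg E i * x i)"
      using insert by (intro sum.cong refl) (auto simp: sg_def)
    then show ?thesis using insert by (simp add: sg_def)
  qed
  define A where "A = (\<lambda>(a'::'u\<Rightarrow>real) (x::nat\<Rightarrow>'u\<Rightarrow>real) E. SUP u\<in>U. ereal (a' u + (\<Sum>i\<in>I. sg E i * x i u)))"
  have L1: "(SUP u\<in>U. ereal (a u + (\<Sum>i\<in>insert j I. sg E i * f i u))) = A (\<lambda>u. a u + f j u) f E"
    if "E \<in> Pow I" for E f
    unfolding A_def by (intro SUP_cong refl arg_cong[where f=ereal]) (simp add: e1[OF that])
  have L2: "(SUP u\<in>U. ereal (a u + (\<Sum>i\<in>insert j I. sg (insert j E) i * f i u))) = A (\<lambda>u. a u - f j u) f E"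
    if "E \<in> Pow I" for E f
    unfolding A_def by (intro SUP_cong refl arg_cong[where f=ereal]) (simp add: e2[OF that])
  have L3: "A (\<lambda>u. a u + f u) t E = (SUP u\<in>U. ereal ((a u + (\<Sum>i\<in>I. sg E i * t i u)) + f u))"
    "A (\<lambda>u. a u - f u) t E = (SUP u\<in>U. ereal ((a u + (\<Sum>i\<in>I. sg E i * t i u)) - f u))" for E f
    unfolding A_def by (simp_all add: algebra_simps)
  have "(\<Sum>E\<in>Pow (insert j I). SUP u\<in>U. ereal (a u + (\<Sum>i\<in>insert j I. sg E i * \<bar>t i u\<bar>)))
      = (\<Sum>E\<in>Pow I. A (\<lambda>u. a u + \<bar>t j u\<bar>) (\<lambda>i u. \<bar>t i u\<bar>) E) + (\<Sum>E\<in>Pow I. A (\<lambda>u. a u - \<bar>t j u\<bar>) (\<lambda>i u. \<bar>t i u\<bar>) E)"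
    unfolding sum_Pow_insert[OF insert(1,2)]
    using L1[of _ "\<lambda>i u. \<bar>t i u\<bar>"] L2[of _ "\<lambda>i u. \<bar>t i u\<bar>"] by (intro arg_cong2[where f="(+)"] sum.cong) auto
  also have "\<dots> \<le> (\<Sum>E\<in>Pow I. A (\<lambda>u. a u + \<bar>t j u\<bar>) t E) + (\<Sum>E\<in>Pow I. A (\<lambda>u. a u - \<bar>t j u\<bar>) t E)"
    unfolding A_def by (intro add_mono insert.IH)
  also have "\<dots> = (\<Sum>E\<in>Pow I. A (\<lambda>u. a u + \<bar>t j u\<bar>) t E + A (\<lambda>u. a u - \<bar>t j u\<bar>) t E)"
    by (simp add: sum.distrib)
  also have "\<dots> \<le> (\<Sum>E\<in>Pow I. A (\<lambda>u. a u + t j u) t E + A (\<lambda>u. a u - t j u) t E)"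
    unfolding L3 by (intro sum_mono one_coord U)
  also have "\<dots> = (\<Sum>E\<in>Pow I. A (\<lambda>u. a u + t j u) t E) + (\<Sum>E\<in>Pow I. A (\<lambda>u. a u - t j u) t E)"
    by (simp add: sum.distrib)
  also have "\<dots> = (\<Sum>E\<in>Pow (insert j I). SUP u\<in>U. ereal (a u + (\<Sum>i\<in>insert j I. sg E i * t i u)))"
    unfolding sum_Pow_insert[OF insert(1,2)]
    using L1[of _ t] L2[of _ t] by (intro arg_cong2[where f="(+)"] sum.cong) auto
  finally show ?case .
qed

lemma enn2ereal_SUP_ennreal:
  fixes r :: "'u \<Rightarrow> real"
  assumes u0: "u0 \<in> U" "r u0 \<ge> 0"
  shows "enn2ereal (SUP u\<in>U. ennreal (r u)) = (SUP u\<in>U. ereal (r u))"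
proof (rule antisym)
  have Z: "0 \<le> (SUP u\<in>U. ereal (r u))"
    using u0 by (metis SUP_upper ereal_less_eq(5) order_trans)
  have "(SUP u\<in>U. ennreal (r u)) \<le> e2ennreal (SUP u\<in>U. ereal (r u))"
  proof (rule SUP_least)
    fix u assume u: "u \<in> U"
    have "enn2ereal (ennreal (r u)) \<le> (SUP u\<in>U. ereal (r u))"
      using Z u by (auto simp: ennreal.rep_eq intro: SUP_upper)
    then show "ennreal (r u) \<le> e2ennreal (SUP u\<in>U. ereal (r u))"
      by (simp add: less_eq_ennreal.rep_eq enn2ereal_e2ennreal[OF Z])
  qed
  then show "enn2ereal (SUP u\<in>U. ennreal (r u)) \<le> (SUP u\<in>U. ereal (r u))"
    by (simp add: less_eq_ennreal.rep_eq enn2ereal_e2ennreal[OF Z])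
  show "(SUP u\<in>U. ereal (r u)) \<le> enn2ereal (SUP u\<in>U. ennreal (r u))"
  proof (rule SUP_least)
    fix u assume u: "u \<in> U"
    have "ereal (r u) \<le> enn2ereal (ennreal (r u))" by (simp add: ennreal.rep_eq)
    also have "\<dots> \<le> enn2ereal (SUP u\<in>U. ennreal (r u))"
      using SUP_upper[OF u, of "\<lambda>u. ennreal (r u)"] by (simp add: less_eq_ennreal.rep_eq)
    finally show "ereal (r u) \<le> enn2ereal (SUP u\<in>U. ennreal (r u))" .
  qed
qed

lemma contraction_enn:
  fixes t :: "nat \<Rightarrow> 'u \<Rightarrow> real"
  assumes I: "finite I" and u0: "u0 \<in> U" "\<And>i. t i u0 = 0"
  shows "(\<Sum>E\<in>Pow I. SUP u\<in>U. ennreal (\<Sum>i\<in>I. sg E i * \<bar>t i u\<bar>))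
       \<le> (\<Sum>E\<in>Pow I. SUP u\<in>U. ennreal (\<Sum>i\<in>I. sg E i * t i u))"
proof -
  have U: "U \<noteq> {}" using u0 by auto
  have C: "(\<Sum>E\<in>Pow I. SUP u\<in>U. ereal (\<Sum>i\<in>I. sg E i * \<bar>t i u\<bar>))
       \<le> (\<Sum>E\<in>Pow I. SUP u\<in>U. ereal (\<Sum>i\<in>I. sg E i * t i u))"
    using contraction[OF I U, of "\<lambda>_. 0" t] by simp
  have "enn2ereal (\<Sum>E\<in>Pow I. SUP u\<in>U. ennreal (\<Sum>i\<in>I. sg E i * \<bar>t i u\<bar>))
      = (\<Sum>E\<in>Pow I. SUP u\<in>U. ereal (\<Sum>i\<in>I. sg E i * \<bar>t i u\<bar>))"
    by (subst sum_enn2ereal[symmetric], simp, rule sum.cong, simp, rule enn2ereal_SUP_ennreal[OF u0(1)], simp add: u0(2))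
  also note C
  also have "(\<Sum>E\<in>Pow I. SUP u\<in>U. ereal (\<Sum>i\<in>I. sg E i * t i u)) = enn2ereal (\<Sum>E\<in>Pow I. SUP u\<in>U. ennreal (\<Sum>i\<in>I. sg E i * t i u))"
    by (subst sum_enn2ereal[symmetric], simp, rule sum.cong, simp, rule enn2ereal_SUP_ennreal[OF u0(1), symmetric], simp add: u0(2))
  finally show ?thesis by (simp add: less_eq_ennreal.rep_eq)
qed

definition cv :: "nat \<Rightarrow> (nat\<Rightarrow>nat\<Rightarrow>real) \<Rightarrow> (nat\<Rightarrow>real) \<Rightarrow> nat \<Rightarrow> real" where
  "cv p C u k = (\<Sum>j<p. C k j * u j)"

definition Yr :: "nat \<Rightarrow> (nat\<times>nat\<Rightarrow>real) \<Rightarrow> (nat\<Rightarrow>real) \<Rightarrow> nat \<Rightarrow> real" where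
  "Yr q B w i = (\<Sum>k<q. B (i,k) * w k)"

lemma mv_eq: "mat_vec p (mat_mult q B C) x i = Yr q B (cv p C x) i"
  unfolding mat_vec_def mat_mult_def Yr_def cv_def
  by (simp add: sum_distrib_left sum_distrib_right mult.assoc) (rule sum.swap)

lemma quad: "(\<Sum>j<p. \<Sum>l<p. d j * (\<Sum>k<q. C k j * C k l) * d l) = (\<Sum>k<q. (cv p C d k)^2)"
proof -
  have "(\<Sum>k<q. (cv p C d k)^2) = (\<Sum>k<q. \<Sum>j<p. \<Sum>l<p. d j * (C k j * C k l) * d l)"
    unfolding cv_def power2_eq_square sum_product by (intro sum.cong refl) (simp add: ac_simps)
  also have "\<dots> = (\<Sum>j<p. \<Sum>k<q. \<Sum>l<p. d j * (C k j * C k l) * d l)" by (rule sum.swap)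
  also have "\<dots> = (\<Sum>j<p. \<Sum>l<p. \<Sum>k<q. d j * (C k j * C k l) * d l)" by (intro sum.cong refl sum.swap)
  also have "\<dots> = (\<Sum>j<p. \<Sum>l<p. d j * (\<Sum>k<q. C k j * C k l) * d l)"
    by (simp add: sum_distrib_left sum_distrib_right)
  finally show ?thesis ..
qed

lemma cv_diff: "cv p C (a - b) k = cv p C a k - cv p C b k"
  unfolding cv_def by (simp add: algebra_simps sum_subtractf)

lemma cv_zero: "cv p C (\<lambda>_. 0) k = 0" unfolding cv_def by simp
lemma Yr_zero: "Yr q B (\<lambda>k. 0) i = 0" unfolding Yr_def by simp

lemma meas_Yr:
  assumes i: "i < n" and phi: "\<phi> \<in> measurable N (gauss_mat n q)"
  shows "(\<lambda>x. Yr q (\<phi> x) w i) \<in> borel_measurable N"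
proof -
  have c: "(\<lambda>x. \<phi> x (i,k)) \<in> borel_measurable N" if "k < q" for k
  proof -
    have "(\<lambda>B. B (i,k)) \<in> measurable (gauss_mat n q) std_gauss"
      unfolding gauss_mat_def using i that by (intro measurable_component_singleton) auto
    then have "(\<lambda>B. B (i,k)) \<in> borel_measurable (gauss_mat n q)"
      by (simp add: measurable_def)
    from measurable_compose[OF phi this] show ?thesis by simp
  qed
  show ?thesis unfolding Yr_def
    by (intro borel_measurable_sum borel_measurable_times c borel_measurable_const) auto
qed

lemma exp_abs_Yr:
  assumes i: "i < n"
  shows "integrable (gauss_mat n q) (\<lambda>B. \<bar>Yr q B w i\<bar>)
    \<and> integral\<^sup>L (gauss_mat n q) (\<lambda>B. \<bar>Yr q B w i\<bar>) = sqrt (2/pi) * sqrt (\<Sum>k<q. (w k)^2)"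
proof -
  define a where "a = (\<lambda>s::nat\<times>nat. if fst s = i then w (snd s) else 0)"
  have 1: "(\<Sum>s\<in>{..<n}\<times>{..<q}. a s * B s) = Yr q B w i" for B
  proof -
    have "(\<Sum>s\<in>{..<n}\<times>{..<q}. a s * B s) = (\<Sum>i'<n. if i' = i then (\<Sum>k<q. w k * B (i',k)) else 0)"
      unfolding sum_pairs by (intro sum.cong refl) (auto simp: a_def)
    also have "\<dots> = Yr q B w i" using i by (simp add: Yr_def mult.commute)
    finally show ?thesis .
  qed
  have 2: "(\<Sum>s\<in>{..<n}\<times>{..<q}. (a s)^2) = (\<Sum>k<q. (w k)^2)"
  proof -
    have "(\<Sum>s\<in>{..<n}\<times>{..<q}. (a s)^2) = (\<Sum>i'<n. if i' = i then (\<Sum>k<q. (w k)^2) else 0)"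
      unfolding sum_pairs by (intro sum.cong refl) (auto simp: a_def)
    also have "\<dots> = (\<Sum>k<q. (w k)^2)" using i by simp
    finally show ?thesis .
  qed
  show ?thesis using gauss_lin_abs[of "{..<n}\<times>{..<q}" a] unfolding 1 2 gauss_mat_def by simp
qed

lemma Yr_mix:
  assumes "i < n"
  shows "Yr q (\<lambda>s\<in>{..<n}\<times>{..<q}. if fst s \<in> E then b s else a s) w i
       = (if i \<in> E then Yr q b w i else Yr q a w i)"
  using assms unfolding Yr_def by (auto intro!: sum.cong)

lemma Yr_restrict:
  assumes "i < n"
  shows "Yr q (restrict b ({..<n}\<times>{..<q})) w i = Yr q b w i"
  using assms unfolding Yr_def by (auto intro!: sum.cong)

lemma ennreal_integral_le:
  assumes "integrable M g"
  shows "ennreal (integral\<^sup>L M g) \<le> (\<integral>\<^sup>+x. ennreal (g x) \<partial>M)"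
proof -
  have im: "integrable M (\<lambda>x. max 0 (g x))" using assms by auto
  have "integral\<^sup>L M g \<le> integral\<^sup>L M (\<lambda>x. max 0 (g x))"
    using assms im by (intro integral_mono) auto
  then have "ennreal (integral\<^sup>L M g) \<le> ennreal (integral\<^sup>L M (\<lambda>x. max 0 (g x)))"
    by (rule ennreal_leI)
  also have "\<dots> = (\<integral>\<^sup>+x. ennreal (max 0 (g x)) \<partial>M)"
    using im by (intro nn_integral_eq_integral[symmetric]) auto
  also have "\<dots> = (\<integral>\<^sup>+x. ennreal (g x) \<partial>M)" by (simp add: ennreal_max_0)
  finally show ?thesis .
qed

lemma meas_SUP_D:
  assumes "countable D" "\<And>u. u \<in> D \<Longrightarrow> g u \<in> borel_measurable N"
  shows "(\<lambda>x. SUP u\<in>D. ennreal (g u x)) \<in> borel_measurable N"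
  using assms by (intro borel_measurable_SUP) auto

lemma ennreal_plus_le: "ennreal (a + b) \<le> ennreal a + ennreal b"
proof -
  have "ennreal (a + b) \<le> ennreal (max 0 a + max 0 b)" by (intro ennreal_leI) auto
  also have "\<dots> = ennreal (max 0 a) + ennreal (max 0 b)" by (intro ennreal_plus) auto
  finally show ?thesis by (simp add: ennreal_max_0)
qed

definition Rf :: "nat \<Rightarrow> nat \<Rightarrow> nat \<Rightarrow> (nat\<Rightarrow>nat\<Rightarrow>real) \<Rightarrow> (nat\<Rightarrow>real) set \<Rightarrow> nat set \<Rightarrow> (nat\<times>nat\<Rightarrow>real) \<Rightarrow> ennreal" where
  "Rf n q p C D E B = (SUP u\<in>D. ennreal (\<Sum>i<n. sg E i * \<bar>Yr q B (cv p C u) i / n\<bar>))"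

definition Lf :: "nat \<Rightarrow> nat \<Rightarrow> nat \<Rightarrow> (nat\<Rightarrow>nat\<Rightarrow>real) \<Rightarrow> (nat\<Rightarrow>real) set \<Rightarrow> nat set \<Rightarrow> (nat\<times>nat\<Rightarrow>real) \<Rightarrow> ennreal" where
  "Lf n q p C D E B = (SUP u\<in>D. ennreal (\<Sum>i<n. sg E i * (Yr q B (cv p C u) i / n)))"

definition Hf :: "nat \<Rightarrow> nat \<Rightarrow> nat \<Rightarrow> (nat\<Rightarrow>nat\<Rightarrow>real) \<Rightarrow> (nat\<Rightarrow>real) set \<Rightarrow> nat set \<Rightarrow> (nat\<times>nat\<Rightarrow>real) \<Rightarrow> (nat\<times>nat\<Rightarrow>real) \<Rightarrow> ennreal" where
  "Hf n q p C D E B B' = (SUP u\<in>D. ennreal (\<Sum>i<n. sg E i * (\<bar>Yr q B' (cv p C u) i / n\<bar> - \<bar>Yr q B (cv p C u) i / n\<bar>)))"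

definition Sf :: "nat \<Rightarrow> nat \<Rightarrow> nat \<Rightarrow> (nat\<Rightarrow>nat\<Rightarrow>real) \<Rightarrow> (nat\<Rightarrow>real) set \<Rightarrow> (nat\<times>nat\<Rightarrow>real) \<Rightarrow> ennreal" where
  "Sf n q p C D B = (SUP u\<in>D. ennreal (sqrt (2/pi) * sqrt (\<Sum>k<q. (cv p C u k)^2) - (\<Sum>i<n. \<bar>Yr q B (cv p C u) i\<bar>) / n))"

definition Lv :: "nat \<Rightarrow> nat \<Rightarrow> nat \<Rightarrow> (nat\<Rightarrow>nat\<Rightarrow>real) \<Rightarrow> (nat\<Rightarrow>real) set \<Rightarrow> (nat\<Rightarrow>real) \<Rightarrow> ennreal" where
  "Lv n q p C D g = (SUP u\<in>D. ennreal ((\<Sum>k<q. g k * cv p C u k) / sqrt n))"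

context
  fixes n q p :: nat and C :: "nat \<Rightarrow> nat \<Rightarrow> real" and D :: "(nat \<Rightarrow> real) set"
  assumes n_pos: "n > 0" and q_pos: "q > 0" and D0: "(\<lambda>_. 0) \<in> D" and Dc: "countable D"
begin

lemma meas_Rf: "\<phi> \<in> measurable N (gauss_mat n q) \<Longrightarrow> (\<lambda>x. Rf n q p C D E (\<phi> x)) \<in> borel_measurable N"
  unfolding Rf_def
  by (intro meas_SUP_D[OF Dc] borel_measurable_sum borel_measurable_times borel_measurable_const
      borel_measurable_abs borel_measurable_divide meas_Yr) auto

lemma meas_Lf: "\<phi> \<in> measurable N (gauss_mat n q) \<Longrightarrow> (\<lambda>x. Lf n q p C D E (\<phi> x)) \<in> borel_measurable N"
  unfolding Lf_def
  by (intro meas_SUP_D[OF Dc] borel_measurable_sum borel_measurable_times borel_measurable_const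
      borel_measurable_abs borel_measurable_divide meas_Yr) auto

lemma meas_Sf: "\<phi> \<in> measurable N (gauss_mat n q) \<Longrightarrow> (\<lambda>x. Sf n q p C D (\<phi> x)) \<in> borel_measurable N"
  unfolding Sf_def
  by (intro meas_SUP_D[OF Dc] borel_measurable_sum borel_measurable_times borel_measurable_const
      borel_measurable_abs borel_measurable_divide borel_measurable_diff meas_Yr) auto

lemma meas_Hf: "\<phi> \<in> measurable N (gauss_mat n q) \<Longrightarrow> \<psi> \<in> measurable N (gauss_mat n q) \<Longrightarrow>
    (\<lambda>x. Hf n q p C D E (\<phi> x) (\<psi> x)) \<in> borel_measurable N"
  unfolding Hf_def
  by (intro meas_SUP_D[OF Dc] borel_measurable_sum borel_measurable_times borel_measurable_const
      borel_measurable_abs borel_measurable_divide borel_measurable_diff meas_Yr) auto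

lemma meas_Lv: "(\<lambda>g. Lv n q p C D g) \<in> borel_measurable (gauss_vec q)"
proof -
  have c: "(\<lambda>g. g k) \<in> borel_measurable (gauss_vec q)" if "k < q" for k
  proof -
    have "(\<lambda>g. g k) \<in> measurable (gauss_vec q) std_gauss"
      unfolding gauss_vec_def using that by (intro measurable_component_singleton) auto
    then show ?thesis by (simp add: measurable_def)
  qed
  show ?thesis unfolding Lv_def
    by (intro meas_SUP_D[OF Dc] borel_measurable_sum borel_measurable_times borel_measurable_const
      borel_measurable_divide c) auto
qed

end

context
  fixes n q p :: nat and C :: "nat \<Rightarrow> nat \<Rightarrow> real" and D :: "(nat \<Rightarrow> real) set"
  assumes n_pos: "n > 0" and q_pos: "q > 0" and D0: "(\<lambda>_. 0) \<in> D" and Dc: "countable D"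
begin

lemma sym1: "Sf n q p C D B \<le> (\<integral>\<^sup>+B'. Hf n q p C D {} B B' \<partial>gauss_mat n q)"
  unfolding Sf_def
proof (rule SUP_least)
  fix u assume u: "u \<in> D"
  interpret P: prob_space "gauss_mat n q" by (rule prob_gm)
  define w where "w = cv p C u"
  define c where "c = (\<Sum>i<n. \<bar>Yr q B w i\<bar>) / n"
  define F where "F = (\<lambda>B'. (\<Sum>i<n. \<bar>Yr q B' w i\<bar>) / n - c)"
  have iY: "integrable (gauss_mat n q) (\<lambda>B'. \<bar>Yr q B' w i\<bar>)" if "i < n" for i
    using exp_abs_Yr[OF that] by blast
  have eY: "integral\<^sup>L (gauss_mat n q) (\<lambda>B'. \<bar>Yr q B' w i\<bar>) = sqrt (2/pi) * sqrt (\<Sum>k<q. (w k)^2)" if "i < n" for i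
    using exp_abs_Yr[OF that] by blast
  have ic: "integrable (gauss_mat n q) (\<lambda>_. c)" by (simp add: P.emeasure_space_1)
  have iF: "integrable (gauss_mat n q) F"
    unfolding F_def by (intro Bochner_Integration.integrable_diff integrable_divide Bochner_Integration.integrable_sum iY ic) auto
  have "integral\<^sup>L (gauss_mat n q) F = (\<Sum>i<n. integral\<^sup>L (gauss_mat n q) (\<lambda>B'. \<bar>Yr q B' w i\<bar>)) / n - c"
    unfolding F_def using iY
    by (subst Bochner_Integration.integral_diff)
       (auto intro!: integrable_divide Bochner_Integration.integrable_sum ic simp: Bochner_Integration.integral_sum P.prob_space)
  also have "\<dots> = sqrt (2/pi) * sqrt (\<Sum>k<q. (w k)^2) - c"
    using n_pos by (simp add: eY)
  finally have IF: "integral\<^sup>L (gauss_mat n q) F = sqrt (2/pi) * sqrt (\<Sum>k<q. (w k)^2) - c" .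
  have "ennreal (sqrt (2/pi) * sqrt (\<Sum>k<q. (cv p C u k)^2) - (\<Sum>i<n. \<bar>Yr q B (cv p C u) i\<bar>) / n)
      = ennreal (integral\<^sup>L (gauss_mat n q) F)"
    by (simp add: IF w_def c_def)
  also have "\<dots> \<le> (\<integral>\<^sup>+B'. ennreal (F B') \<partial>gauss_mat n q)"
    by (rule ennreal_integral_le[OF iF])
  also have "\<dots> \<le> (\<integral>\<^sup>+B'. Hf n q p C D {} B B' \<partial>gauss_mat n q)"
  proof (rule nn_integral_mono)
    fix B' 
    have "F B' = (\<Sum>i<n. sg {} i * (\<bar>Yr q B' (cv p C u) i / n\<bar> - \<bar>Yr q B (cv p C u) i / n\<bar>))"
      using n_pos by (simp add: F_def c_def w_def sg_def sum_subtractf sum_divide_distrib abs_divide)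
    then show "ennreal (F B') \<le> Hf n q p C D {} B B'"
      unfolding Hf_def using u by (intro SUP_upper2[OF u]) simp
  qed
  finally show "ennreal (sqrt (2/pi) * sqrt (\<Sum>k<q. (cv p C u k)^2) - (\<Sum>i<n. \<bar>Yr q B (cv p C u) i\<bar>) / n)
      \<le> (\<integral>\<^sup>+B'. Hf n q p C D {} B B' \<partial>gauss_mat n q)" .
qed

lemma sym2:
  assumes E: "E \<subseteq> {..<n}"
  shows "(\<integral>\<^sup>+x. Hf n q p C D {} (topm n q x) (botm n q x) \<partial>GG n q)
       = (\<integral>\<^sup>+x. Hf n q p C D E (topm n q x) (botm n q x) \<partial>GG n q)"
proof -
  have m: "(\<lambda>x. Hf n q p C D {} (topm n q x) (botm n q x)) \<in> borel_measurable (GG n q)"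
    by (intro meas_Hf[OF n_pos q_pos D0 Dc] meas_topm meas_botm)
  have "(\<integral>\<^sup>+x. Hf n q p C D {} (topm n q x) (botm n q x) \<partial>GG n q)
      = (\<integral>\<^sup>+x. Hf n q p C D {} (topm n q (\<lambda>s\<in>{..<2*n}\<times>{..<q}. x (swp n E s)))
                                  (botm n q (\<lambda>s\<in>{..<2*n}\<times>{..<q}. x (swp n E s))) \<partial>GG n q)"
    using swap_GG[OF E m] by simp
  also have "\<dots> = (\<integral>\<^sup>+x. Hf n q p C D E (topm n q x) (botm n q x) \<partial>GG n q)"
  proof (intro nn_integral_cong)
    fix x
    show "Hf n q p C D {} (topm n q (\<lambda>s\<in>{..<2*n}\<times>{..<q}. x (swp n E s)))
              (botm n q (\<lambda>s\<in>{..<2*n}\<times>{..<q}. x (swp n E s)))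
        = Hf n q p C D E (topm n q x) (botm n q x)"
      unfolding top_swp[OF E] bot_swp[OF E] Hf_def
      by (intro SUP_cong refl arg_cong[where f=ennreal] sum.cong) (auto simp: Yr_mix sg_def)
  qed
  finally show ?thesis .
qed

lemma sym3: "Hf n q p C D E B B' \<le> Rf n q p C D E B' + Rf n q p C D ({..<n} - E) B"
  unfolding Hf_def
proof (rule SUP_least)
  fix u assume u: "u \<in> D"
  have "(\<Sum>i<n. sg E i * (\<bar>Yr q B' (cv p C u) i / n\<bar> - \<bar>Yr q B (cv p C u) i / n\<bar>))
      = (\<Sum>i<n. sg E i * \<bar>Yr q B' (cv p C u) i / n\<bar>) + (\<Sum>i<n. sg ({..<n} - E) i * \<bar>Yr q B (cv p C u) i / n\<bar>)"
    unfolding sum.distrib[symmetric] by (intro sum.cong refl) (auto simp: sg_def algebra_simps)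
  then have "ennreal (\<Sum>i<n. sg E i * (\<bar>Yr q B' (cv p C u) i / n\<bar> - \<bar>Yr q B (cv p C u) i / n\<bar>))
      \<le> ennreal (\<Sum>i<n. sg E i * \<bar>Yr q B' (cv p C u) i / n\<bar>) + ennreal (\<Sum>i<n. sg ({..<n} - E) i * \<bar>Yr q B (cv p C u) i / n\<bar>)"
    by (simp add: ennreal_plus_le)
  also have "\<dots> \<le> Rf n q p C D E B' + Rf n q p C D ({..<n} - E) B"
    unfolding Rf_def using u by (intro add_mono SUP_upper)
  finally show "ennreal (\<Sum>i<n. sg E i * (\<bar>Yr q B' (cv p C u) i / n\<bar> - \<bar>Yr q B (cv p C u) i / n\<bar>))
      \<le> Rf n q p C D E B' + Rf n q p C D ({..<n} - E) B" .
qed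

lemma sym4: "(\<Sum>E\<in>Pow {..<n}. Rf n q p C D E B) \<le> (\<Sum>E\<in>Pow {..<n}. Lf n q p C D E B)"
proof -
  have z: "Yr q B (cv p C (\<lambda>_. 0)) i / n = 0" for i
    by (simp add: cv_zero Yr_def)
  show ?thesis unfolding Rf_def Lf_def
    using contraction_enn[of "{..<n}" "\<lambda>_. 0" D "\<lambda>i u. Yr q B (cv p C u) i / n"] D0 z by simp
qed

lemma sym5:
  shows "(\<integral>\<^sup>+B. Lf n q p C D E B \<partial>gauss_mat n q) = (\<integral>\<^sup>+g. Lv n q p C D g \<partial>gauss_vec q)"
proof -
  define \<Phi> where "\<Phi> = (\<lambda>B. \<lambda>k\<in>{..<q}. (\<Sum>i<n. sg E i * B (i,k)) / sqrt n)"
  have eq: "Lf n q p C D E B = Lv n q p C D (\<Phi> B)" for B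
    unfolding Lf_def Lv_def
  proof (intro SUP_cong refl arg_cong[where f=ennreal])
    fix u
    have sn: "sqrt (real n) * sqrt (real n) = n" using n_pos by simp
    have "(\<Sum>i<n. sg E i * (Yr q B (cv p C u) i / n)) = (\<Sum>i<n. \<Sum>k<q. sg E i * B (i,k) * cv p C u k) / n"
      by (simp add: Yr_def sum_divide_distrib sum_distrib_left mult.assoc)
    also have "\<dots> = (\<Sum>k<q. \<Sum>i<n. sg E i * B (i,k) * cv p C u k) / (sqrt n * sqrt n)"
      by (subst sum.swap) (simp add: sn)
    also have "\<dots> = (\<Sum>k<q. \<Phi> B k * cv p C u k) / sqrt n"
      by (simp add: \<Phi>_def sum_distrib_right sum_divide_distrib)
    finally show "(\<Sum>i<n. sg E i * (Yr q B (cv p C u) i / n)) = (\<Sum>k<q. \<Phi> B k * cv p C u k) / sqrt n" .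
  qed
  have sgabs: "\<And>i. \<bar>sg E i\<bar> = 1" by (simp add: sg_def)
  have dd: "distr (gauss_mat n q) (gauss_vec q) \<Phi> = gauss_vec q"
    unfolding \<Phi>_def by (rule gauss_colsum[OF n_pos q_pos sgabs])
  have mPhi: "\<Phi> \<in> measurable (gauss_mat n q) (gauss_vec q)"
  proof -
    have "(\<lambda>B. (\<Sum>i<n. sg E i * B (i,k)) / sqrt n) \<in> measurable (gauss_mat n q) std_gauss" if "k < q" for k
    proof -
      have c: "(\<lambda>B. B (i,k)) \<in> borel_measurable (gauss_mat n q)" if "i < n" for i
      proof -
        have "(\<lambda>B. B (i,k)) \<in> measurable (gauss_mat n q) std_gauss"
          unfolding gauss_mat_def using \<open>k < q\<close> that by (intro measurable_component_singleton) auto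
        then show ?thesis by (simp add: measurable_def)
      qed
      have "(\<lambda>B. (\<Sum>i<n. sg E i * B (i,k)) / sqrt n) \<in> borel_measurable (gauss_mat n q)"
        by (intro borel_measurable_divide borel_measurable_sum borel_measurable_times borel_measurable_const c) auto
      then show ?thesis by (simp add: measurable_def)
    qed
    then show ?thesis unfolding \<Phi>_def gauss_vec_def by (intro measurable_restrict) auto
  qed
  have "(\<integral>\<^sup>+B. Lf n q p C D E B \<partial>gauss_mat n q) = (\<integral>\<^sup>+B. Lv n q p C D (\<Phi> B) \<partial>gauss_mat n q)"
    by (simp add: eq)
  also have "\<dots> = integral\<^sup>N (distr (gauss_mat n q) (gauss_vec q) \<Phi>) (Lv n q p C D)"
    by (rule nn_integral_distr[symmetric, OF mPhi]) (use meas_Lv[OF n_pos q_pos D0 Dc] in simp)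
  also have "\<dots> = (\<integral>\<^sup>+g. Lv n q p C D g \<partial>gauss_vec q)" by (simp add: dd)
  finally show ?thesis .
qed

end

context
  fixes n q p :: nat and C :: "nat \<Rightarrow> nat \<Rightarrow> real" and D :: "(nat \<Rightarrow> real) set"
  assumes n_pos: "n > 0" and q_pos: "q > 0" and D0: "(\<lambda>_. 0) \<in> D" and Dc: "countable D"
begin

lemma meas_Hf2: "(\<lambda>B'. Hf n q p C D E B B') \<in> borel_measurable (gauss_mat n q)"
  unfolding Hf_def
  by (intro meas_SUP_D[OF Dc] borel_measurable_sum borel_measurable_times borel_measurable_const
      borel_measurable_abs borel_measurable_divide borel_measurable_diff meas_Yr[OF _ measurable_ident_sets[OF refl]]) auto

lemma step_a:
  assumes E: "E \<subseteq> {..<n}"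
  shows "(\<integral>\<^sup>+B. Sf n q p C D B \<partial>gauss_mat n q)
      \<le> (\<integral>\<^sup>+B. Rf n q p C D E B \<partial>gauss_mat n q) + (\<integral>\<^sup>+B. Rf n q p C D ({..<n} - E) B \<partial>gauss_mat n q)"
proof -
  note mR = meas_Rf[OF n_pos q_pos D0 Dc]
  have "(\<integral>\<^sup>+B. Sf n q p C D B \<partial>gauss_mat n q) \<le> (\<integral>\<^sup>+B. (\<integral>\<^sup>+B'. Hf n q p C D {} B B' \<partial>gauss_mat n q) \<partial>gauss_mat n q)"
    by (intro nn_integral_mono sym1[OF n_pos q_pos D0 Dc])
  also have "\<dots> = (\<integral>\<^sup>+x. Hf n q p C D {} (topm n q x) (botm n q x) \<partial>GG n q)"
    by (rule fold_GG[symmetric]) (auto intro: meas_Hf[OF n_pos q_pos D0 Dc] meas_Hf2)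
  also have "\<dots> = (\<integral>\<^sup>+x. Hf n q p C D E (topm n q x) (botm n q x) \<partial>GG n q)"
    by (rule sym2[OF n_pos q_pos D0 Dc E])
  also have "\<dots> \<le> (\<integral>\<^sup>+x. Rf n q p C D E (botm n q x) + Rf n q p C D ({..<n} - E) (topm n q x) \<partial>GG n q)"
    by (intro nn_integral_mono sym3[OF n_pos q_pos D0 Dc])
  also have "\<dots> = (\<integral>\<^sup>+x. Rf n q p C D E (botm n q x) \<partial>GG n q) + (\<integral>\<^sup>+x. Rf n q p C D ({..<n} - E) (topm n q x) \<partial>GG n q)"
    by (intro nn_integral_add mR meas_topm meas_botm)
  also have "\<dots> = (\<integral>\<^sup>+B. Rf n q p C D E B \<partial>gauss_mat n q) + (\<integral>\<^sup>+B. Rf n q p C D ({..<n} - E) B \<partial>gauss_mat n q)"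
    by (simp add: int_top int_bot mR[OF measurable_ident_sets[OF refl]])
  finally show ?thesis .
qed

lemma main_sym: "(\<integral>\<^sup>+B. Sf n q p C D B \<partial>gauss_mat n q) \<le> 2 * (\<integral>\<^sup>+g. Lv n q p C D g \<partial>gauss_vec q)"
proof -
  define P where "P = Pow {..<n::nat}"
  define IS where "IS = (\<integral>\<^sup>+B. Sf n q p C D B \<partial>gauss_mat n q)"
  define IR where "IR = (\<lambda>E. \<integral>\<^sup>+B. Rf n q p C D E B \<partial>gauss_mat n q)"
  define IL where "IL = (\<integral>\<^sup>+g. Lv n q p C D g \<partial>gauss_vec q)"
  note mR = meas_Rf[OF n_pos q_pos D0 Dc, OF measurable_ident_sets[OF refl]]
  note mL = meas_Lf[OF n_pos q_pos D0 Dc, OF measurable_ident_sets[OF refl]]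
  have fP: "finite P" by (simp add: P_def)
  have "of_nat (card P) * IS = (\<Sum>E\<in>P. IS)" by simp
  also have "\<dots> \<le> (\<Sum>E\<in>P. IR E + IR ({..<n} - E))"
    by (intro sum_mono) (auto simp: P_def IS_def IR_def intro!: step_a)
  also have "\<dots> = (\<Sum>E\<in>P. IR E) + (\<Sum>E\<in>P. IR ({..<n} - E))" by (rule sum.distrib)
  also have "(\<Sum>E\<in>P. IR ({..<n} - E)) = (\<Sum>E\<in>P. IR E)"
    by (rule sum.reindex_bij_witness[where i="\<lambda>E. {..<n} - E" and j="\<lambda>E. {..<n} - E"]) (auto simp: P_def)
  also have "(\<Sum>E\<in>P. IR E) + (\<Sum>E\<in>P. IR E) = 2 * (\<Sum>E\<in>P. IR E)" by (simp add: mult_2)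
  also have "(\<Sum>E\<in>P. IR E) = (\<integral>\<^sup>+B. (\<Sum>E\<in>P. Rf n q p C D E B) \<partial>gauss_mat n q)"
    unfolding IR_def by (rule nn_integral_sum[symmetric]) (rule mR)
  finally have 1: "of_nat (card P) * IS \<le> 2 * (\<integral>\<^sup>+B. (\<Sum>E\<in>P. Rf n q p C D E B) \<partial>gauss_mat n q)" .
  have "(\<integral>\<^sup>+B. (\<Sum>E\<in>P. Rf n q p C D E B) \<partial>gauss_mat n q) \<le> (\<integral>\<^sup>+B. (\<Sum>E\<in>P. Lf n q p C D E B) \<partial>gauss_mat n q)"
    unfolding P_def by (intro nn_integral_mono sym4[OF n_pos q_pos D0 Dc])
  also have "\<dots> = (\<Sum>E\<in>P. \<integral>\<^sup>+B. Lf n q p C D E B \<partial>gauss_mat n q)"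
    by (rule nn_integral_sum) (rule mL)
  also have "\<dots> = (\<Sum>E\<in>P. IL)" unfolding IL_def by (simp add: sym5[OF n_pos q_pos D0 Dc])
  also have "\<dots> = of_nat (card P) * IL" by simp
  finally have 2: "(\<integral>\<^sup>+B. (\<Sum>E\<in>P. Rf n q p C D E B) \<partial>gauss_mat n q) \<le> of_nat (card P) * IL" .
  have "of_nat (card P) * IS \<le> of_nat (card P) * (2 * IL)"
    using order_trans[OF 1 mult_left_mono[OF 2, of 2]] by (simp add: mult_ac)
  moreover have "(of_nat (card P) :: ennreal) \<noteq> 0" using fP by (auto simp: P_def)
  moreover have "(of_nat (card P) :: ennreal) \<noteq> \<top>" by simp
  ultimately show ?thesis unfolding IS_def IL_def by (simp add: ennreal_mult_le_mult_iff)
qed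

end

lemma Yr_diff: "Yr q B (\<lambda>k. a k - b k) i = Yr q B a i - Yr q B b i"
  unfolding Yr_def by (simp add: algebra_simps sum_subtractf)

lemma cv_diff_fun: "cv p C (a - b) = (\<lambda>k. cv p C a k - cv p C b k)"
  by (rule ext) (rule cv_diff)

lemma cont_r: "n > 0 \<Longrightarrow> continuous_on UNIV (\<lambda>u. sqrt (2/pi) * sqrt (\<Sum>k<q. (cv p C u k)^2) - (\<Sum>i<n. \<bar>Yr q B (cv p C u) i\<bar>) / n)"
  unfolding cv_def Yr_def by (intro continuous_intros continuous_on_product_coordinates) auto

lemma cont_w: "continuous_on UNIV (\<lambda>u::nat\<Rightarrow>real. \<bar>\<Sum>j<p. (\<Sum>k<q. C k j * g k) * u j\<bar>)"
  by (intro continuous_intros continuous_on_product_coordinates)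

lemma pointwise_A:
  fixes xs xh \<nu> :: "nat \<Rightarrow> real"
  assumes n: "n > 0"
    and nu: "(\<Sum>i<n. \<bar>\<nu> i\<bar>) / real n \<le> \<epsilon>"
    and fit: "(\<Sum>i<n. \<bar>mat_vec p (mat_mult q B C) xh i - (mat_vec p (mat_mult q B C) xs i + \<nu> i)\<bar>) / real n \<le> \<epsilon>"
  shows "ennreal (sqrt (\<Sum>j<p. \<Sum>l<p. (xh j - xs j) * (\<Sum>k<q. C k j * C k l) * (xh l - xs l)))
    \<le> ennreal (sqrt (pi/2)) * (2 * ennreal \<epsilon> + ennreal (sqrt (2/pi) * sqrt (\<Sum>k<q. (cv p C (xh - xs) k)^2)
          - (\<Sum>i<n. \<bar>Yr q B (cv p C (xh - xs)) i\<bar>) / n))"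
proof -
  define u where "u = xh - xs"
  define N where "N = sqrt (\<Sum>k<q. (cv p C u k)^2)"
  define f where "f = (\<Sum>i<n. \<bar>Yr q B (cv p C u) i\<bar>) / n"
  have eps: "\<epsilon> \<ge> 0" using nu n by (metis divide_nonneg_pos of_nat_0_less_iff order_trans sum_nonneg abs_ge_zero)
  have N0: "N \<ge> 0" by (simp add: N_def sum_nonneg)
  have q: "(\<Sum>j<p. \<Sum>l<p. (xh j - xs j) * (\<Sum>k<q. C k j * C k l) * (xh l - xs l)) = (\<Sum>k<q. (cv p C u k)^2)"
    using quad[where d="xh - xs" and p=p and q=q and C=C] by (simp add: u_def)
  have Y: "Yr q B (cv p C u) i = mat_vec p (mat_mult q B C) xh i - mat_vec p (mat_mult q B C) xs i" for i
    by (simp add: u_def cv_diff_fun Yr_diff mv_eq)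
  have "(\<Sum>i<n. \<bar>Yr q B (cv p C u) i\<bar>) \<le> (\<Sum>i<n. \<bar>mat_vec p (mat_mult q B C) xh i - (mat_vec p (mat_mult q B C) xs i + \<nu> i)\<bar> + \<bar>\<nu> i\<bar>)"
    unfolding Y by (intro sum_mono) linarith
  also have "\<dots> = (\<Sum>i<n. \<bar>mat_vec p (mat_mult q B C) xh i - (mat_vec p (mat_mult q B C) xs i + \<nu> i)\<bar>) + (\<Sum>i<n. \<bar>\<nu> i\<bar>)"
    by (rule sum.distrib)
  finally have "f \<le> 2 * \<epsilon>" using nu fit n unfolding f_def by (simp add: field_simps)
  then have le: "sqrt (2/pi) * N \<le> 2 * \<epsilon> + max 0 (sqrt (2/pi) * N - f)" by linarith
  have one: "sqrt (pi/2) * sqrt (2/pi) = 1"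
    by (subst real_sqrt_mult[symmetric]) simp
  have "N = sqrt (pi/2) * (sqrt (2/pi) * N)" using one by (simp add: mult.assoc[symmetric])
  also have "\<dots> \<le> sqrt (pi/2) * (2 * \<epsilon> + max 0 (sqrt (2/pi) * N - f))"
    by (intro mult_left_mono le) auto
  finally have "ennreal N \<le> ennreal (sqrt (pi/2) * (2 * \<epsilon> + max 0 (sqrt (2/pi) * N - f)))"
    by (rule ennreal_leI)
  also have "\<dots> = ennreal (sqrt (pi/2)) * (2 * ennreal \<epsilon> + ennreal (sqrt (2/pi) * N - f))"
    using eps by (simp add: ennreal_mult ennreal_plus ennreal_max_0 ennreal_mult'')
  finally show ?thesis by (simp add: q N_def f_def u_def)
qed

theorem theorem6:
  fixes n q p :: nat
    and C :: "nat \<Rightarrow> nat \<Rightarrow> real"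
    and K :: "(nat \<Rightarrow> real) set"
    and \<epsilon> :: real
  assumes n_pos: "n > 0"
    and K_sub: "K \<subseteq> vecs p"
    and eps_nonneg: "\<epsilon> \<ge> 0"
  shows
    "(\<integral>\<^sup>+ B. (SUP (xs, \<nu>, xh) \<in> {(xs, \<nu>, xh). xs \<in> K \<and> \<nu> \<in> vecs n
            \<and> (\<Sum>i<n. \<bar>\<nu> i\<bar>) / real n \<le> \<epsilon>
            \<and> xh \<in> K
            \<and> (\<Sum>i<n. \<bar>mat_vec p (mat_mult q B C) xh i
                       - (mat_vec p (mat_mult q B C) xs i + \<nu> i)\<bar>) / real n \<le> \<epsilon>}.
          ennreal (sqrt (\<Sum>j<p. \<Sum>l<p. (xh j - xs j) * (\<Sum>k<q. C k j * C k l) * (xh l - xs l))))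
        \<partial>gauss_mat n q)
     \<le> ennreal (sqrt (2 * pi)) *
        ((\<integral>\<^sup>+ g. (SUP u \<in> {a - b | a b. a \<in> K \<and> b \<in> K}.
                      ennreal \<bar>\<Sum>j<p. (\<Sum>k<q. C k j * g k) * u j\<bar>) \<partial>gauss_vec q)
           / ennreal (sqrt (real n))
         + ennreal \<epsilon>)"
  (is "(\<integral>\<^sup>+B. ?I B \<partial>gauss_mat n q) \<le> ?R")
proof (cases "K = {} \<or> q = 0")
  case True
  have "?I B \<le> 0" for B
  proof (rule SUP_least)
    fix x assume x: "x \<in> {(xs, \<nu>, xh). xs \<in> K \<and> \<nu> \<in> vecs n
            \<and> (\<Sum>i<n. \<bar>\<nu> i\<bar>) / real n \<le> \<epsilon>
            \<and> xh \<in> K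
            \<and> (\<Sum>i<n. \<bar>mat_vec p (mat_mult q B C) xh i
                       - (mat_vec p (mat_mult q B C) xs i + \<nu> i)\<bar>) / real n \<le> \<epsilon>}"
    obtain xs \<nu> xh where xx: "x = (xs, \<nu>, xh)" by (cases x) auto
    have "K \<noteq> {}" using x xx by auto
    then have "q = 0" using True by auto
    then show "(case x of (xs, \<nu>, xh) \<Rightarrow> ennreal (sqrt (\<Sum>j<p. \<Sum>l<p. (xh j - xs j) * (\<Sum>k<q. C k j * C k l) * (xh l - xs l)))) \<le> 0"
      by (simp add: xx)
  qed
  then have "(\<integral>\<^sup>+B. ?I B \<partial>gauss_mat n q) \<le> (\<integral>\<^sup>+B. 0 \<partial>gauss_mat n q)"
    by (intro nn_integral_mono) auto
  then show ?thesis by simp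
next
  case False
  then have Kne: "K \<noteq> {}" and q_pos: "q > 0" by auto
  define T where "T = {a - b | a b. a \<in> K \<and> b \<in> K}"
  obtain a0 where a0: "a0 \<in> K" using Kne by auto
  have T0: "(\<lambda>_. 0) \<in> T" unfolding T_def using a0 by (auto intro!: exI[of _ a0] simp: fun_eq_iff)
  obtain D' where D': "D' \<subseteq> T" "countable D'" "\<And>U. open U \<Longrightarrow> U \<inter> T \<noteq> {} \<Longrightarrow> U \<inter> D' \<noteq> {}"
    using dense_subset[of T] by blast
  define D where "D = insert (\<lambda>_. 0) D'"
  have DT: "D \<subseteq> T" using D' T0 by (auto simp: D_def)
  have Dc: "countable D" using D' by (simp add: D_def)
  have D0: "(\<lambda>_. 0) \<in> D" by (simp add: D_def)
  have Dd: "U \<inter> D \<noteq> {}" if "open U" "U \<inter> T \<noteq> {}" for U using D'(3)[OF that] by (auto simp: D_def)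
  define c where "c = ennreal (sqrt (pi/2))"
  define c' where "c' = ennreal (inverse (sqrt n))"
  define Wi where "Wi = (\<lambda>g. SUP u\<in>T. ennreal \<bar>\<Sum>j<p. (\<Sum>k<q. C k j * g k) * u j\<bar>)"
  define W where "W = (\<integral>\<^sup>+g. Wi g \<partial>gauss_vec q)"
  note pr = n_pos q_pos D0 Dc
  have step1: "?I B \<le> c * (2 * ennreal \<epsilon> + Sf n q p C D B)" for B
  proof (rule SUP_least)
    fix x assume x: "x \<in> {(xs, \<nu>, xh). xs \<in> K \<and> \<nu> \<in> vecs n
            \<and> (\<Sum>i<n. \<bar>\<nu> i\<bar>) / real n \<le> \<epsilon>
            \<and> xh \<in> K
            \<and> (\<Sum>i<n. \<bar>mat_vec p (mat_mult q B C) xh i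
                       - (mat_vec p (mat_mult q B C) xs i + \<nu> i)\<bar>) / real n \<le> \<epsilon>}"
    obtain xs \<nu> xh where xx: "x = (xs, \<nu>, xh)" by (cases x) auto
    have xs: "xs \<in> K" and xh: "xh \<in> K"
      and nu: "(\<Sum>i<n. \<bar>\<nu> i\<bar>) / real n \<le> \<epsilon>"
      and fit: "(\<Sum>i<n. \<bar>mat_vec p (mat_mult q B C) xh i - (mat_vec p (mat_mult q B C) xs i + \<nu> i)\<bar>) / real n \<le> \<epsilon>"
      using x xx by auto
    have uT: "xh - xs \<in> T" unfolding T_def using xs xh by blast
    have "ennreal (sqrt (2/pi) * sqrt (\<Sum>k<q. (cv p C (xh - xs) k)^2) - (\<Sum>i<n. \<bar>Yr q B (cv p C (xh - xs)) i\<bar>) / n)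
        \<le> (SUP u\<in>T. ennreal (sqrt (2/pi) * sqrt (\<Sum>k<q. (cv p C u k)^2) - (\<Sum>i<n. \<bar>Yr q B (cv p C u) i\<bar>) / n))"
      using uT by (rule SUP_upper)
    also have "\<dots> = Sf n q p C D B"
      unfolding Sf_def by (rule sup_dense[OF DT Dd cont_r[OF n_pos]])
    finally have le: "ennreal (sqrt (2/pi) * sqrt (\<Sum>k<q. (cv p C (xh - xs) k)^2) - (\<Sum>i<n. \<bar>Yr q B (cv p C (xh - xs)) i\<bar>) / n)
        \<le> Sf n q p C D B" .
    have "ennreal (sqrt (\<Sum>j<p. \<Sum>l<p. (xh j - xs j) * (\<Sum>k<q. C k j * C k l) * (xh l - xs l)))
        \<le> c * (2 * ennreal \<epsilon> + ennreal (sqrt (2/pi) * sqrt (\<Sum>k<q. (cv p C (xh - xs) k)^2)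
          - (\<Sum>i<n. \<bar>Yr q B (cv p C (xh - xs)) i\<bar>) / n))"
      unfolding c_def by (rule pointwise_A[OF n_pos nu fit])
    also have "\<dots> \<le> c * (2 * ennreal \<epsilon> + Sf n q p C D B)"
      by (intro mult_left_mono add_left_mono le) auto
    finally show "(case x of (xs, \<nu>, xh) \<Rightarrow> ennreal (sqrt (\<Sum>j<p. \<Sum>l<p. (xh j - xs j) * (\<Sum>k<q. C k j * C k l) * (xh l - xs l))))
        \<le> c * (2 * ennreal \<epsilon> + Sf n q p C D B)"
      by (simp add: xx)
  qed
  interpret P: prob_space "gauss_mat n q" by (rule prob_gm)
  have mS: "(\<lambda>B. Sf n q p C D B) \<in> borel_measurable (gauss_mat n q)"
    by (rule meas_Sf[OF pr measurable_ident_sets[OF refl]])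
  have LvW: "(\<integral>\<^sup>+g. Lv n q p C D g \<partial>gauss_vec q) \<le> W * c'"
  proof -
    define WD where "WD = (\<lambda>g. SUP u\<in>D. ennreal \<bar>\<Sum>j<p. (\<Sum>k<q. C k j * g k) * u j\<bar>)"
    have WiD: "Wi g = WD g" for g
      unfolding Wi_def WD_def by (rule sup_dense[OF DT Dd cont_w])
    have mWD: "WD \<in> borel_measurable (gauss_vec q)"
    proof -
      have cc: "(\<lambda>g. g k) \<in> borel_measurable (gauss_vec q)" if "k < q" for k
      proof -
        have "(\<lambda>g. g k) \<in> measurable (gauss_vec q) std_gauss"
          unfolding gauss_vec_def using that by (intro measurable_component_singleton) auto
        then show ?thesis by (simp add: measurable_def)
      qed
      show ?thesis unfolding WD_def
        by (intro meas_SUP_D[OF Dc] borel_measurable_abs borel_measurable_sum borel_measurable_times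
            borel_measurable_const cc) auto
    qed
    have pw: "Lv n q p C D g \<le> WD g * c'" for g
      unfolding Lv_def
    proof (rule SUP_least)
      fix u assume u: "u \<in> D"
      have eq: "(\<Sum>k<q. g k * cv p C u k) = (\<Sum>j<p. (\<Sum>k<q. C k j * g k) * u j)"
        unfolding cv_def sum_distrib_left sum_distrib_right by (subst sum.swap) (simp add: mult_ac)
      have "ennreal ((\<Sum>k<q. g k * cv p C u k) / sqrt n) \<le> ennreal (\<bar>\<Sum>j<p. (\<Sum>k<q. C k j * g k) * u j\<bar> * inverse (sqrt n))"
        unfolding eq by (intro ennreal_leI) (simp add: divide_inverse mult_right_mono)
      also have "\<dots> = ennreal \<bar>\<Sum>j<p. (\<Sum>k<q. C k j * g k) * u j\<bar> * c'"
        unfolding c'_def by (simp add: ennreal_mult)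
      also have "\<dots> \<le> WD g * c'"
        unfolding WD_def using u by (intro mult_right_mono SUP_upper) auto
      finally show "ennreal ((\<Sum>k<q. g k * cv p C u k) / sqrt n) \<le> WD g * c'" .
    qed
    have "(\<integral>\<^sup>+g. Lv n q p C D g \<partial>gauss_vec q) \<le> (\<integral>\<^sup>+g. WD g * c' \<partial>gauss_vec q)"
      by (intro nn_integral_mono pw)
    also have "\<dots> = (\<integral>\<^sup>+g. WD g \<partial>gauss_vec q) * c'" by (rule nn_integral_multc[OF mWD])
    also have "(\<integral>\<^sup>+g. WD g \<partial>gauss_vec q) = W"
    proof -
      have "Wi = WD" by (rule ext) (rule WiD)
      then show ?thesis unfolding W_def by simp
    qed
    finally show ?thesis .
  qed
  have "(\<integral>\<^sup>+B. ?I B \<partial>gauss_mat n q) \<le> (\<integral>\<^sup>+B. c * (2 * ennreal \<epsilon> + Sf n q p C D B) \<partial>gauss_mat n q)"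
    by (intro nn_integral_mono step1)
  also have "\<dots> = c * (2 * ennreal \<epsilon> + (\<integral>\<^sup>+B. Sf n q p C D B \<partial>gauss_mat n q))"
    using mS by (simp add: nn_integral_cmult nn_integral_add P.emeasure_space_1)
  also have "\<dots> \<le> c * (2 * ennreal \<epsilon> + 2 * (\<integral>\<^sup>+g. Lv n q p C D g \<partial>gauss_vec q))"
    by (intro mult_left_mono add_left_mono main_sym[OF pr]) auto
  also have "\<dots> \<le> c * (2 * ennreal \<epsilon> + 2 * (W * c'))"
    by (intro mult_left_mono add_left_mono LvW) auto
  also have "c * (2 * ennreal \<epsilon> + 2 * (W * c')) = ennreal (sqrt (2 * pi)) * (W / ennreal (sqrt (real n)) + ennreal \<epsilon>)"
  proof -
    have s: "sqrt (2 * pi) = sqrt (pi/2) * 2"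
    proof -
      have "sqrt (2*pi) = sqrt (4 * (pi/2))" by simp
      also have "\<dots> = sqrt 4 * sqrt (pi/2)" by (rule real_sqrt_mult)
      finally show ?thesis by simp
    qed
    have e1: "ennreal (sqrt (2 * pi)) = c * 2" unfolding s c_def by (simp add: ennreal_mult'')
    have e2: "W / ennreal (sqrt (real n)) = W * c'"
      unfolding c'_def divide_ennreal_def using n_pos by (simp add: inverse_ennreal)
    show ?thesis unfolding e1 e2 by (simp add: algebra_simps)
  qed
  finally show ?thesis unfolding W_def Wi_def T_def .
qed

end
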